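(* Let $H$ be a 5-vertex 3-graph which is $C_5$-free and $J_4$-free, contains a copy of $K_4^3$, and has complete shadow graph. Then $H$ is isomorphic to the 3-graph $H_4$ with vertex set $[5]$ and edges $123,234,134,124,514,523$.
   Context: A 3-graph is a 3-uniform hypergraph. $K_4^3$ is the complete 3-graph on 4 vertices (edges $123,124,134,234$); $C_5$ has vertex set $[5]$ and edges $123,234,345,145,125$; $J_4$ has vertex set $[5]$ and edges $123,124,125,134,135,145$. $H$ is $F$-free if it has no (not necessarily induced) subhypergraph isomorphic to $F$. The shadow graph of $H$ is the graph on $V(H)$ in which a pair is an edge iff it is contained in some edge of $H$; it is complete if every pair of vertices is such an edge. *)

theory Defs
  imports Main
begin

definition is_3graph :: "'a set \<Rightarrow> 'a set set \<Rightarrow> bool" where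
  "is_3graph V E \<longleftrightarrow> finite V \<and> (\<forall>e\<in>E. e \<subseteq> V \<and> card e = 3)"

definition contains_copy :: "'a set \<Rightarrow> 'a set set \<Rightarrow> 'b set \<Rightarrow> 'b set set \<Rightarrow> bool" where
  "contains_copy V E FV FE \<longleftrightarrow>
     (\<exists>f. inj_on f FV \<and> f ` FV \<subseteq> V \<and> (\<forall>e\<in>FE. f ` e \<in> E))"

definition free_of :: "'a set \<Rightarrow> 'a set set \<Rightarrow> 'b set \<Rightarrow> 'b set set \<Rightarrow> bool" where
  "free_of V E FV FE \<longleftrightarrow> \<not> contains_copy V E FV FE"

definition K43_V :: "nat set" where "K43_V = {1,2,3,4}"
definition K43_E :: "nat set set" where
  "K43_E = {{1,2,3},{1,2,4},{1,3,4},{2,3,4}}"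

definition C5_V :: "nat set" where "C5_V = {1..5}"
definition C5_E :: "nat set set" where
  "C5_E = {{1,2,3},{2,3,4},{3,4,5},{1,4,5},{1,2,5}}"

definition J4_V :: "nat set" where "J4_V = {1..5}"
definition J4_E :: "nat set set" where
  "J4_E = {{1,2,3},{1,2,4},{1,2,5},{1,3,4},{1,3,5},{1,4,5}}"

definition H4_V :: "nat set" where "H4_V = {1..5}"
definition H4_E :: "nat set set" where
  "H4_E = {{1,2,3},{2,3,4},{1,3,4},{1,2,4},{5,1,4},{5,2,3}}"

definition complete_shadow :: "'a set \<Rightarrow> 'a set set \<Rightarrow> bool" where
  "complete_shadow V E \<longleftrightarrow> (\<forall>x\<in>V. \<forall>y\<in>V. x \<noteq> y \<longrightarrow> (\<exists>e\<in>E. {x, y} \<subseteq> e))"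

definition hg_isomorphic :: "'a set \<Rightarrow> 'a set set \<Rightarrow> 'b set \<Rightarrow> 'b set set \<Rightarrow> bool" where
  "hg_isomorphic V E V' E' \<longleftrightarrow>
     (\<exists>f. bij_betw f V V' \<and> (\<forall>e. e \<subseteq> V \<longrightarrow> (e \<in> E \<longleftrightarrow> f ` e \<in> E')))"

end

theory Submission
  imports Defs
begin

lemma J4_lem:
  assumes "distinct [x,y,z,w,u]" "{x,y,z,w,u} \<subseteq> V"
    "{x,y,z} \<in> E" "{x,y,w} \<in> E" "{x,y,u} \<in> E" "{x,z,w} \<in> E" "{x,z,u} \<in> E" "{x,w,u} \<in> E"
  shows "contains_copy V E J4_V J4_E"
proof -
  define f where "f = (\<lambda>i::nat. if i = 1 then x else if i = 2 then y else if i = 3 then z else if i = 4 then w else u)"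
  have "inj_on f J4_V" using assms(1) unfolding inj_on_def f_def J4_V_def by auto
  moreover have "f ` J4_V \<subseteq> V" using assms(2) unfolding f_def J4_V_def by auto
  moreover have "\<forall>e\<in>J4_E. f ` e \<in> E" using assms(3-8) unfolding J4_E_def f_def
    by (auto simp: insert_commute)
  ultimately show ?thesis unfolding contains_copy_def by blast
qed

lemma C5_lem:
  assumes "distinct [x1,x2,x3,x4,x5]" "{x1,x2,x3,x4,x5} \<subseteq> V"
    "{x1,x2,x3} \<in> E" "{x2,x3,x4} \<in> E" "{x3,x4,x5} \<in> E" "{x1,x4,x5} \<in> E" "{x1,x2,x5} \<in> E"
  shows "contains_copy V E C5_V C5_E"
proof -
  define f where "f = (\<lambda>i::nat. if i = 1 then x1 else if i = 2 then x2 else if i = 3 then x3 else if i = 4 then x4 else x5)"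
  have "inj_on f C5_V" using assms(1) unfolding inj_on_def f_def C5_V_def by auto
  moreover have "f ` C5_V \<subseteq> V" using assms(2) unfolding f_def C5_V_def by auto
  moreover have "\<forall>e\<in>C5_E. f ` e \<in> E" using assms(3-7) unfolding C5_E_def f_def
    by (auto simp: insert_commute)
  ultimately show ?thesis unfolding contains_copy_def by blast
qed

lemma three_subsets:
  assumes "distinct [a,b,c,d,v]" "e \<subseteq> {a,b,c,d,v}" "card e = 3"
  shows "e = {a,b,c} \<or> e = {a,b,d} \<or> e = {a,c,d} \<or> e = {b,c,d} \<or>
         e = {v,a,b} \<or> e = {v,a,c} \<or> e = {v,a,d} \<or> e = {v,b,c} \<or> e = {v,b,d} \<or> e = {v,c,d}"
proof -
  have E: "e = (if a \<in> e then {a} else {}) \<union> (if b \<in> e then {b} else {}) \<union> (if c \<in> e then {c} else {})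
     \<union> (if d \<in> e then {d} else {}) \<union> (if v \<in> e then {v} else {})" using assms(2) by auto
  show ?thesis using assms(1,3) apply (subst (asm) E) apply (subst (1 2 3 4 5 6 7 8 9 10) E)
    by (simp split: if_splits add: insert_commute)
qed

lemma three_subsets4:
  assumes "distinct [a,b,c,d]" "e \<subseteq> {a,b,c,d}" "card e = 3"
  shows "e = {a,b,c} \<or> e = {a,b,d} \<or> e = {a,c,d} \<or> e = {b,c,d}"
proof -
  have E: "e = (if a \<in> e then {a} else {}) \<union> (if b \<in> e then {b} else {}) \<union> (if c \<in> e then {c} else {})
     \<union> (if d \<in> e then {d} else {})" using assms(2) by auto
  show ?thesis using assms(1,3) apply (subst (asm) E) apply (subst (1 2 3 4) E)
    by (simp split: if_splits add: insert_commute)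
qed

lemma iso_lem:
  assumes dist: "distinct [a,b,c,d,v]" and VV: "V = {a,b,c,d,v}"
    and EE: "E = {{a,c,d},{c,d,b},{a,d,b},{a,c,b},{v,a,b},{v,c,d}}"
  shows "hg_isomorphic V E H4_V H4_E"
proof -
  define g where "g = (\<lambda>x. if x = a then 1 else if x = b then 4 else if x = c then 2 else if x = d then (3::nat) else 5)"
  have inj: "inj_on g V" using dist unfolding VV inj_on_def g_def by auto
  have im: "g ` V = H4_V" using dist unfolding VV g_def H4_V_def by auto
  have g: "g a = 1" "g b = 4" "g c = 2" "g d = 3" "g v = 5" using dist unfolding g_def by auto
  have H: "H4_E = image g ` E" unfolding EE H4_E_def image_insert image_empty g
    by (simp add: insert_commute)
  have EP: "E \<subseteq> Pow V" unfolding EE VV by auto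
  have injP: "inj_on (image g) (Pow V)" using inj by (rule inj_on_image_Pow)
  have "\<forall>e. e \<subseteq> V \<longrightarrow> (e \<in> E \<longleftrightarrow> g ` e \<in> H4_E)"
    unfolding H using inj_on_image_mem_iff[OF injP _ EP] by auto
  moreover have "bij_betw g V H4_V" using inj im by (simp add: bij_betw_def)
  ultimately show ?thesis unfolding hg_isomorphic_def by blast
qed

theorem lemma2p14:
  fixes V :: "'a set" and E :: "'a set set"
  assumes "is_3graph V E"
    and "card V = 5"
    and "free_of V E C5_V C5_E"
    and "free_of V E J4_V J4_E"
    and "contains_copy V E K43_V K43_E"
    and "complete_shadow V E"
  shows "hg_isomorphic V E H4_V H4_E"
proof -
  have fin: "finite V" and edges: "\<And>e. e \<in> E \<Longrightarrow> e \<subseteq> V \<and> card e = 3"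
    using assms(1) unfolding is_3graph_def by auto
  have noC5: "\<not> contains_copy V E C5_V C5_E" and noJ4: "\<not> contains_copy V E J4_V J4_E"
    using assms(3,4) unfolding free_of_def by auto
  obtain f where f: "inj_on f K43_V" "f ` K43_V \<subseteq> V" "\<forall>e\<in>K43_E. f ` e \<in> E"
    using assms(5) unfolding contains_copy_def by blast
  define a where "a = f 1"
  define b where "b = f 2"
  define c where "c = f 3"
  define d where "d = f 4"
  have abcd: "distinct [a,b,c,d]" using f(1) unfolding a_def b_def c_def d_def K43_V_def inj_on_def
    by auto
  have inV: "{a,b,c,d} \<subseteq> V" using f(2) unfolding a_def b_def c_def d_def K43_V_def by auto
  have K: "{a,b,c} \<in> E" "{a,b,d} \<in> E" "{a,c,d} \<in> E" "{b,c,d} \<in> E"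
    using f(3) unfolding a_def b_def c_def d_def K43_E_def by auto
  have "card {a,b,c,d} = 4" using abcd by auto
  then have "{a,b,c,d} \<noteq> V" using assms(2) by auto
  then obtain v where v: "v \<in> V" "v \<notin> {a,b,c,d}" using inV by blast
  have dist: "distinct [a,b,c,d,v]" using abcd v by auto
  have sub: "{a,b,c,d,v} \<subseteq> V" using inV v by auto
  have "card {a,b,c,d,v} = 5" using dist by auto
  then have VV: "V = {a,b,c,d,v}" using card_subset_eq[OF fin sub] assms(2) by auto
  have ten: "\<And>e. e \<in> E \<Longrightarrow> e = {a,b,c} \<or> e = {a,b,d} \<or> e = {a,c,d} \<or> e = {b,c,d} \<or>
         e = {v,a,b} \<or> e = {v,a,c} \<or> e = {v,a,d} \<or> e = {v,b,c} \<or> e = {v,b,d} \<or> e = {v,c,d}"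
    using three_subsets[OF dist] edges VV by metis
  have sh: "\<And>x. x \<in> V \<Longrightarrow> x \<noteq> v \<Longrightarrow> \<exists>e\<in>E. {x, v} \<subseteq> e"
    using assms(6) v(1) unfolding complete_shadow_def by blast
  have sa: "{v,a,b} \<in> E \<or> {v,a,c} \<in> E \<or> {v,a,d} \<in> E"
  proof -
    obtain e where "e \<in> E" "{a,v} \<subseteq> e" using sh[of a] VV dist by auto
    then show ?thesis using ten[of e] dist by auto
  qed
  have sb: "{v,a,b} \<in> E \<or> {v,b,c} \<in> E \<or> {v,b,d} \<in> E"
  proof -
    obtain e where "e \<in> E" "{b,v} \<subseteq> e" using sh[of b] VV dist by auto
    then show ?thesis using ten[of e] dist by auto
  qed
  have sc: "{v,a,c} \<in> E \<or> {v,b,c} \<in> E \<or> {v,c,d} \<in> E"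
  proof -
    obtain e where "e \<in> E" "{c,v} \<subseteq> e" using sh[of c] VV dist by auto
    then show ?thesis using ten[of e] dist by auto
  qed
  have sd: "{v,a,d} \<in> E \<or> {v,b,d} \<in> E \<or> {v,c,d} \<in> E"
  proof -
    obtain e where "e \<in> E" "{d,v} \<subseteq> e" using sh[of d] VV dist by auto
    then show ?thesis using ten[of e] dist by auto
  qed
  have J: "\<not> ({x,y,z} \<in> E \<and> {x,y,w} \<in> E \<and> {x,z,w} \<in> E \<and> {x,y,u} \<in> E \<and> {x,z,u} \<in> E \<and> {x,w,u} \<in> E)"
    if "distinct [x,y,z,w,u]" "{x,y,z,w,u} \<subseteq> V" for x y z w u
    using J4_lem[OF that] noJ4 by blast
  have C: "\<not> ({x1,x2,x3} \<in> E \<and> {x2,x3,x4} \<in> E \<and> {x3,x4,x5} \<in> E \<and> {x1,x4,x5} \<in> E \<and> {x1,x2,x5} \<in> E)"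
    if "distinct [x1,x2,x3,x4,x5]" "{x1,x2,x3,x4,x5} \<subseteq> V" for x1 x2 x3 x4 x5
    using C5_lem[OF that] noC5 by blast
  have ja: "\<not> ({v,a,b} \<in> E \<and> {v,a,c} \<in> E \<and> {v,a,d} \<in> E)"
    using J[of a b c d v] dist VV K by (auto simp: insert_commute)
  have jb: "\<not> ({v,a,b} \<in> E \<and> {v,b,c} \<in> E \<and> {v,b,d} \<in> E)"
    using J[of b a c d v] dist VV K by (auto simp: insert_commute)
  have jc: "\<not> ({v,a,c} \<in> E \<and> {v,b,c} \<in> E \<and> {v,c,d} \<in> E)"
    using J[of c a b d v] dist VV K by (auto simp: insert_commute)
  have jd: "\<not> ({v,a,d} \<in> E \<and> {v,b,d} \<in> E \<and> {v,c,d} \<in> E)"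
    using J[of d a b c v] dist VV K by (auto simp: insert_commute)
  have K3: "{x,y,z} \<in> E" if "distinct [x,y,z]" "{x,y,z} \<subseteq> {a,b,c,d}" for x y z
  proof -
    have s3: "{x,y,z} \<subseteq> {a,b,c,d}" "card {x,y,z} = 3" using that by auto
    from three_subsets4[OF abcd s3] show "{x,y,z} \<in> E" by (elim disjE) (simp_all add: K)
  qed
  text \<open>path constraints: path p-q-r-s gives C5 (v,q,p,s,r)\<close>
  have P: "\<not> ({v,p,q} \<in> E \<and> {v,q,r} \<in> E \<and> {v,r,s} \<in> E)"
    if "distinct [p,q,r,s]" "{p,q,r,s} \<subseteq> {a,b,c,d}" for p q r s
  proof -
    have "{v,q,p,s,r} \<subseteq> V" using that VV by auto
    moreover have "distinct [v,q,p,s,r]" using that v by auto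
    moreover have "{q,p,s} \<in> E" by (rule K3) (use that in auto)
    moreover have "{p,s,r} \<in> E" by (rule K3) (use that in auto)
    ultimately show ?thesis using C[of v q p s r] by (auto simp: insert_commute)
  qed
  have p0: "\<not> ({v,a,b} \<in> E \<and> {v,b,c} \<in> E \<and> {v,c,d} \<in> E)"
    using P[of a b c d] dist by (auto simp: insert_commute)
  have p1: "\<not> ({v,a,b} \<in> E \<and> {v,b,d} \<in> E \<and> {v,c,d} \<in> E)"
    using P[of a b d c] dist by (auto simp: insert_commute)
  have p2: "\<not> ({v,a,c} \<in> E \<and> {v,b,c} \<in> E \<and> {v,b,d} \<in> E)"
    using P[of a c b d] dist by (auto simp: insert_commute)
  have p3: "\<not> ({v,a,c} \<in> E \<and> {v,c,d} \<in> E \<and> {v,b,d} \<in> E)"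
    using P[of a c d b] dist by (auto simp: insert_commute)
  have p4: "\<not> ({v,a,d} \<in> E \<and> {v,b,d} \<in> E \<and> {v,b,c} \<in> E)"
    using P[of a d b c] dist by (auto simp: insert_commute)
  have p5: "\<not> ({v,a,d} \<in> E \<and> {v,c,d} \<in> E \<and> {v,b,c} \<in> E)"
    using P[of a d c b] dist by (auto simp: insert_commute)
  have p6: "\<not> ({v,a,b} \<in> E \<and> {v,a,c} \<in> E \<and> {v,c,d} \<in> E)"
    using P[of b a c d] dist by (auto simp: insert_commute)
  have p7: "\<not> ({v,a,b} \<in> E \<and> {v,a,d} \<in> E \<and> {v,c,d} \<in> E)"
    using P[of b a d c] dist by (auto simp: insert_commute)
  have p8: "\<not> ({v,b,c} \<in> E \<and> {v,a,c} \<in> E \<and> {v,a,d} \<in> E)"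
    using P[of b c a d] dist by (auto simp: insert_commute)
  have p9: "\<not> ({v,b,d} \<in> E \<and> {v,a,d} \<in> E \<and> {v,a,c} \<in> E)"
    using P[of b d a c] dist by (auto simp: insert_commute)
  have p10: "\<not> ({v,a,c} \<in> E \<and> {v,a,b} \<in> E \<and> {v,b,d} \<in> E)"
    using P[of c a b d] dist by (auto simp: insert_commute)
  have p11: "\<not> ({v,b,c} \<in> E \<and> {v,a,b} \<in> E \<and> {v,a,d} \<in> E)"
    using P[of c b a d] dist by (auto simp: insert_commute)
  have cases3: "({v,a,b} \<in> E \<and> {v,c,d} \<in> E \<and> {v,a,c} \<notin> E \<and> {v,a,d} \<notin> E \<and> {v,b,c} \<notin> E \<and> {v,b,d} \<notin> E) \<or>
     ({v,a,c} \<in> E \<and> {v,b,d} \<in> E \<and> {v,a,b} \<notin> E \<and> {v,a,d} \<notin> E \<and> {v,b,c} \<notin> E \<and> {v,c,d} \<notin> E) \<or>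
     ({v,a,d} \<in> E \<and> {v,b,c} \<in> E \<and> {v,a,b} \<notin> E \<and> {v,a,c} \<notin> E \<and> {v,b,d} \<notin> E \<and> {v,c,d} \<notin> E)"
    using sa sb sc sd ja jb jc jd p0 p1 p2 p3 p4 p5 p6 p7 p8 p9 p10 p11 by argo
  from cases3 show ?thesis
  proof (elim disjE)
    assume h: "{v,a,b} \<in> E \<and> {v,c,d} \<in> E \<and> {v,a,c} \<notin> E \<and> {v,a,d} \<notin> E \<and> {v,b,c} \<notin> E \<and> {v,b,d} \<notin> E"
    have "E = {{a,b,c},{a,b,d},{a,c,d},{b,c,d},{v,a,b},{v,c,d}}"
    proof (rule set_eqI, rule iffI)
      fix e assume e: "e \<in> E"
      show "e \<in> {{a,b,c},{a,b,d},{a,c,d},{b,c,d},{v,a,b},{v,c,d}}" using ten[OF e] e h by (elim disjE) simp_all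
    next
      fix e assume "e \<in> {{a,b,c},{a,b,d},{a,c,d},{b,c,d},{v,a,b},{v,c,d}}"
      then show "e \<in> E" using h K by (simp only: insert_iff empty_iff) (elim disjE; simp)
    qed
    also have "... = {{a,c,d},{c,d,b},{a,d,b},{a,c,b},{v,a,b},{v,c,d}}" by (simp only: insert_commute)
    finally have EE: "E = ..." .
    have V2: "V = {a,b,c,d,v}" using VV by (simp only: insert_commute)
    have D2: "distinct [a,b,c,d,v]" using dist by auto
    show ?thesis by (rule iso_lem[OF D2 V2 EE])
  next
    assume h: "{v,a,c} \<in> E \<and> {v,b,d} \<in> E \<and> {v,a,b} \<notin> E \<and> {v,a,d} \<notin> E \<and> {v,b,c} \<notin> E \<and> {v,c,d} \<notin> E"
    have "E = {{a,b,c},{a,b,d},{a,c,d},{b,c,d},{v,a,c},{v,b,d}}"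
    proof (rule set_eqI, rule iffI)
      fix e assume e: "e \<in> E"
      show "e \<in> {{a,b,c},{a,b,d},{a,c,d},{b,c,d},{v,a,c},{v,b,d}}" using ten[OF e] e h by (elim disjE) simp_all
    next
      fix e assume "e \<in> {{a,b,c},{a,b,d},{a,c,d},{b,c,d},{v,a,c},{v,b,d}}"
      then show "e \<in> E" using h K by (simp only: insert_iff empty_iff) (elim disjE; simp)
    qed
    also have "... = {{a,b,d},{b,d,c},{a,d,c},{a,b,c},{v,a,c},{v,b,d}}" by (simp only: insert_commute)
    finally have EE: "E = ..." .
    have V2: "V = {a,c,b,d,v}" using VV by (simp only: insert_commute)
    have D2: "distinct [a,c,b,d,v]" using dist by auto
    show ?thesis by (rule iso_lem[OF D2 V2 EE])
  next
    assume h: "{v,a,d} \<in> E \<and> {v,b,c} \<in> E \<and> {v,a,b} \<notin> E \<and> {v,a,c} \<notin> E \<and> {v,b,d} \<notin> E \<and> {v,c,d} \<notin> E"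
    have "E = {{a,b,c},{a,b,d},{a,c,d},{b,c,d},{v,a,d},{v,b,c}}"
    proof (rule set_eqI, rule iffI)
      fix e assume e: "e \<in> E"
      show "e \<in> {{a,b,c},{a,b,d},{a,c,d},{b,c,d},{v,a,d},{v,b,c}}" using ten[OF e] e h by (elim disjE) simp_all
    next
      fix e assume "e \<in> {{a,b,c},{a,b,d},{a,c,d},{b,c,d},{v,a,d},{v,b,c}}"
      then show "e \<in> E" using h K by (simp only: insert_iff empty_iff) (elim disjE; simp)
    qed
    also have "... = {{a,b,c},{b,c,d},{a,c,d},{a,b,d},{v,a,d},{v,b,c}}" by (simp only: insert_commute)
    finally have EE: "E = ..." .
    have V2: "V = {a,d,b,c,v}" using VV by (simp only: insert_commute)
    have D2: "distinct [a,d,b,c,v]" using dist by auto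
    show ?thesis by (rule iso_lem[OF D2 V2 EE])
  qed
qed

end
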